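(* Let $S$ be a solid and let $x\in S^*$ with $x=a+e(x)$ for some $a\in S$ with $e(a)=0$. Then (1) $e(x)<|a|$; and (2) $e(x)a^{-1}=e(x)x^{-1}=e(u(x))$.
   Context: A solid is a set $S$ with two binary operations $+$ and $\cdot$ (written $xy$) and a binary relation $\le$ satisfying the following axioms (all variables range over $S$). (A1) $+$ is associative and commutative. (A2) For each $x$ there is $e$ with $x+e=x$ such that $e+f=e$ for every $f$ with $x+f=x$; this $e$ is unique and is denoted $e(x)$ (the magnitude of $x$). An element $x$ with $x=e(x)$ is called a magnitude. (A3) For each $x$ there is $s$ with $x+s=e(x)$ and $e(s)=e(x)$; it is unique and denoted $-x$; write $x-y$ for $x+(-y)$. (A4) $e(x+y)=e(x)$ or $e(x+y)=e(y)$. (M1) $\cdot$ is associative and commutative. (M2) For each $x\neq e(x)$ there is $u$ with $xu=x$ such that $uv=u$ for every $v$ with $xv=x$; it is unique and denoted $u(x)$. (M3) For each $x\ne e(x)$ there is $d$ with $xd=u(x)$ and $u(d)=u(x)$; it is unique and denoted $x^{-1}$; write $y/x$ for $yx^{-1}$. (M4) If $x\neq e(x)$ and $y\ne e(y)$ then $u(xy)=u(x)$ or $u(xy)=u(y)$. (O1) $\le$ is a total order (reflexive, antisymmetric, transitive, total); $x<y$ means $x\le y$ and $x\ne y$. (O2) $x\le y\Rightarrow x+z\le y+z$. (O3) $y+e(x)=e(x)\Rightarrow (y\le e(x)$ and $-y\le e(x))$. (O4) $(e(x)<x$ and $y\le z)\Rightarrow xy\le xz$. (O5) $e(y)\le y\le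 z\Rightarrow e(x)y\le e(x)z$. (AM1) For all $x,y$ there is $z$ with $e(x)y=e(z)$. (AM2) $e(xy)=e(x)y+e(y)x$. (AM3) If $x\ne e(x)$ then $e(u(x))=e(x)/x$. (AM4) (distributivity axiom) $xy+xz=x(y+z)+e(x)y+e(x)z$. (AM5) $-(xy)=(-x)y$. (E1) There is $m$ with $m+x=x$ for all $x$; it is unique, called zero and denoted $0$. (E2) There is $u$ with $ux=x$ for all $x$; it is unique, called one and denoted $1$. (E3) There is $M$ with $e(x)+M=M$ for all $x$. (E4) There is $x$ with $e(x)\ne 0$ and $e(x)\ne M$. (E5) For every $x$ there is $a$ with $x=a+e(x)$ and $e(a)=0$. (E6) If $x,y$ are magnitudes with $x<y$, there is $z$ with $z\ne e(z)$ and $x<z<y$. Further notation: $S^*=\{x\in S: x\ne e(x)\}$ (zeroless elements). $x$ is positive if $e(x)\le x$ and negative if $x<e(x)$; $|x|=x$ if $x$ is positive and $|x|=-x$ if $x$ is negative. $x$ is precise if $e(x)=0$. The relative uncertainty $R(x)$ is $e(u(x))$ if $x\ne e(x)$, and $M$ (from (E3)) if $x=e(x)$. *)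

theory Defs
  imports Main
begin

text \<open>A solid is modelled on a type 'a (the carrier S is the whole type), with
addition ad, multiplication mu and order relation le as parameters.\<close>

definition sol_e :: "('a \<Rightarrow> 'a \<Rightarrow> 'a) \<Rightarrow> 'a \<Rightarrow> 'a" where
  "sol_e ad x = (THE e. ad x e = x \<and> (\<forall>f. ad x f = x \<longrightarrow> ad e f = e))"

definition sol_neg :: "('a \<Rightarrow> 'a \<Rightarrow> 'a) \<Rightarrow> 'a \<Rightarrow> 'a" where
  "sol_neg ad x = (THE s. ad x s = sol_e ad x \<and> sol_e ad s = sol_e ad x)"

definition sol_u :: "('a \<Rightarrow> 'a \<Rightarrow> 'a) \<Rightarrow> 'a \<Rightarrow> 'a" where
  "sol_u mu x = (THE u. mu x u = x \<and> (\<forall>v. mu x v = x \<longrightarrow> mu u v = u))"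

definition sol_inv :: "('a \<Rightarrow> 'a \<Rightarrow> 'a) \<Rightarrow> 'a \<Rightarrow> 'a" where
  "sol_inv mu x = (THE d. mu x d = sol_u mu x \<and> sol_u mu d = sol_u mu x)"

definition sol_zero :: "('a \<Rightarrow> 'a \<Rightarrow> 'a) \<Rightarrow> 'a" where
  "sol_zero ad = (THE m. \<forall>x. ad m x = x)"

definition sol_one :: "('a \<Rightarrow> 'a \<Rightarrow> 'a) \<Rightarrow> 'a" where
  "sol_one mu = (THE u. \<forall>x. mu u x = x)"

definition sol_abs :: "('a \<Rightarrow> 'a \<Rightarrow> 'a) \<Rightarrow> ('a \<Rightarrow> 'a \<Rightarrow> bool) \<Rightarrow> 'a \<Rightarrow> 'a" where
  "sol_abs ad le x = (if le (sol_e ad x) x then x else sol_neg ad x)"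

definition solid :: "('a \<Rightarrow> 'a \<Rightarrow> 'a) \<Rightarrow> ('a \<Rightarrow> 'a \<Rightarrow> 'a) \<Rightarrow> ('a \<Rightarrow> 'a \<Rightarrow> bool) \<Rightarrow> bool" where
  "solid ad mu le \<longleftrightarrow>
    \<comment> \<open>A1\<close>
    (\<forall>x y z. ad (ad x y) z = ad x (ad y z)) \<and> (\<forall>x y. ad x y = ad y x) \<and>
    \<comment> \<open>A2\<close>
    (\<forall>x. \<exists>!e. ad x e = x \<and> (\<forall>f. ad x f = x \<longrightarrow> ad e f = e)) \<and>
    \<comment> \<open>A3\<close>
    (\<forall>x. \<exists>!s. ad x s = sol_e ad x \<and> sol_e ad s = sol_e ad x) \<and>
    \<comment> \<open>A4\<close>
    (\<forall>x y. sol_e ad (ad x y) = sol_e ad x \<or> sol_e ad (ad x y) = sol_e ad y) \<and>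
    \<comment> \<open>M1\<close>
    (\<forall>x y z. mu (mu x y) z = mu x (mu y z)) \<and> (\<forall>x y. mu x y = mu y x) \<and>
    \<comment> \<open>M2\<close>
    (\<forall>x. x \<noteq> sol_e ad x \<longrightarrow> (\<exists>!u. mu x u = x \<and> (\<forall>v. mu x v = x \<longrightarrow> mu u v = u))) \<and>
    \<comment> \<open>M3\<close>
    (\<forall>x. x \<noteq> sol_e ad x \<longrightarrow> (\<exists>!d. mu x d = sol_u mu x \<and> sol_u mu d = sol_u mu x)) \<and>
    \<comment> \<open>M4\<close>
    (\<forall>x y. x \<noteq> sol_e ad x \<longrightarrow> y \<noteq> sol_e ad y \<longrightarrow>
       sol_u mu (mu x y) = sol_u mu x \<or> sol_u mu (mu x y) = sol_u mu y) \<and>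
    \<comment> \<open>O1\<close>
    (\<forall>x. le x x) \<and> (\<forall>x y. le x y \<longrightarrow> le y x \<longrightarrow> x = y) \<and>
    (\<forall>x y z. le x y \<longrightarrow> le y z \<longrightarrow> le x z) \<and> (\<forall>x y. le x y \<or> le y x) \<and>
    \<comment> \<open>O2\<close>
    (\<forall>x y z. le x y \<longrightarrow> le (ad x z) (ad y z)) \<and>
    \<comment> \<open>O3\<close>
    (\<forall>x y. ad y (sol_e ad x) = sol_e ad x \<longrightarrow>
       le y (sol_e ad x) \<and> le (sol_neg ad y) (sol_e ad x)) \<and>
    \<comment> \<open>O4\<close>
    (\<forall>x y z. (le (sol_e ad x) x \<and> sol_e ad x \<noteq> x \<and> le y z) \<longrightarrow> le (mu x y) (mu x z)) \<and>
    \<comment> \<open>O5\<close>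
    (\<forall>x y z. le (sol_e ad y) y \<and> le y z \<longrightarrow> le (mu (sol_e ad x) y) (mu (sol_e ad x) z)) \<and>
    \<comment> \<open>AM1\<close>
    (\<forall>x y. \<exists>z. mu (sol_e ad x) y = sol_e ad z) \<and>
    \<comment> \<open>AM2\<close>
    (\<forall>x y. sol_e ad (mu x y) = ad (mu (sol_e ad x) y) (mu (sol_e ad y) x)) \<and>
    \<comment> \<open>AM3\<close>
    (\<forall>x. x \<noteq> sol_e ad x \<longrightarrow> sol_e ad (sol_u mu x) = mu (sol_e ad x) (sol_inv mu x)) \<and>
    \<comment> \<open>AM4\<close>
    (\<forall>x y z. ad (mu x y) (mu x z) =
       ad (ad (mu x (ad y z)) (mu (sol_e ad x) y)) (mu (sol_e ad x) z)) \<and>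
    \<comment> \<open>AM5\<close>
    (\<forall>x y. sol_neg ad (mu x y) = mu (sol_neg ad x) y) \<and>
    \<comment> \<open>E1\<close>
    (\<exists>!m. \<forall>x. ad m x = x) \<and>
    \<comment> \<open>E2\<close>
    (\<exists>!u. \<forall>x. mu u x = x) \<and>
    \<comment> \<open>E3 and E4 (E4 refers to the M of E3)\<close>
    (\<exists>M. (\<forall>x. ad (sol_e ad x) M = M) \<and>
       (\<exists>x. sol_e ad x \<noteq> sol_zero ad \<and> sol_e ad x \<noteq> M)) \<and>
    \<comment> \<open>E5\<close>
    (\<forall>x. \<exists>a. x = ad a (sol_e ad x) \<and> sol_e ad a = sol_zero ad) \<and>
    \<comment> \<open>E6\<close>
    (\<forall>x y. x = sol_e ad x \<longrightarrow> y = sol_e ad y \<longrightarrow> le x y \<longrightarrow> x \<noteq> y \<longrightarrow>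
       (\<exists>z. z \<noteq> sol_e ad z \<and> le x z \<and> x \<noteq> z \<and> le z y \<and> z \<noteq> y))"

end

theory Submission
  imports Defs
begin

locale sol = fixes ad mu :: "'a \<Rightarrow> 'a \<Rightarrow> 'a" and le :: "'a \<Rightarrow> 'a \<Rightarrow> bool"
  assumes S: "solid ad mu le"
begin

lemmas ax = S[unfolded solid_def]

abbreviation "E \<equiv> sol_e ad"
abbreviation "N \<equiv> sol_neg ad"
abbreviation "Z \<equiv> sol_zero ad"
abbreviation "U \<equiv> sol_u mu"
abbreviation "I \<equiv> sol_inv mu"

lemma assoc: "ad (ad x y) z = ad x (ad y z)" using ax[THEN conjunct1] by blast
lemma comm: "ad x y = ad y x" using ax[THEN conjunct2, THEN conjunct1] by blast
lemma A2: "\<exists>!e. ad x e = x \<and> (\<forall>f. ad x f = x \<longrightarrow> ad e f = e)" using ax[THEN conjunct2, THEN conjunct2, THEN conjunct1] by blast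
lemma A3: "\<exists>!s. ad x s = E x \<and> E s = E x" using ax[THEN conjunct2, THEN conjunct2, THEN conjunct2, THEN conjunct1] by blast
lemma A4: "E (ad x y) = E x \<or> E (ad x y) = E y" using ax[THEN conjunct2, THEN conjunct2, THEN conjunct2, THEN conjunct2, THEN conjunct1] by blast
lemma massoc: "mu (mu x y) z = mu x (mu y z)" using ax[THEN conjunct2, THEN conjunct2, THEN conjunct2, THEN conjunct2, THEN conjunct2, THEN conjunct1] by blast
lemma mcomm: "mu x y = mu y x" using ax[THEN conjunct2, THEN conjunct2, THEN conjunct2, THEN conjunct2, THEN conjunct2, THEN conjunct2, THEN conjunct1] by blast
lemma M2: "x \<noteq> E x \<Longrightarrow> \<exists>!u. mu x u = x \<and> (\<forall>v. mu x v = x \<longrightarrow> mu u v = u)" using ax[THEN conjunct2, THEN conjunct2, THEN conjunct2, THEN conjunct2, THEN conjunct2, THEN conjunct2, THEN conjunct2, THEN conjunct1] by blast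
lemma M3: "x \<noteq> E x \<Longrightarrow> \<exists>!d. mu x d = U x \<and> U d = U x" using ax[THEN conjunct2, THEN conjunct2, THEN conjunct2, THEN conjunct2, THEN conjunct2, THEN conjunct2, THEN conjunct2, THEN conjunct2, THEN conjunct1] by blast
lemma refl: "le x x" using ax[THEN conjunct2, THEN conjunct2, THEN conjunct2, THEN conjunct2, THEN conjunct2, THEN conjunct2, THEN conjunct2, THEN conjunct2, THEN conjunct2, THEN conjunct2, THEN conjunct1] by blast
lemma antisym: "le x y \<Longrightarrow> le y x \<Longrightarrow> x = y" using ax[THEN conjunct2, THEN conjunct2, THEN conjunct2, THEN conjunct2, THEN conjunct2, THEN conjunct2, THEN conjunct2, THEN conjunct2, THEN conjunct2, THEN conjunct2, THEN conjunct2, THEN conjunct1] by blast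
lemma trans: "le x y \<Longrightarrow> le y z \<Longrightarrow> le x z" using ax[THEN conjunct2, THEN conjunct2, THEN conjunct2, THEN conjunct2, THEN conjunct2, THEN conjunct2, THEN conjunct2, THEN conjunct2, THEN conjunct2, THEN conjunct2, THEN conjunct2, THEN conjunct2, THEN conjunct1] by blast
lemma total: "le x y \<or> le y x" using ax[THEN conjunct2, THEN conjunct2, THEN conjunct2, THEN conjunct2, THEN conjunct2, THEN conjunct2, THEN conjunct2, THEN conjunct2, THEN conjunct2, THEN conjunct2, THEN conjunct2, THEN conjunct2, THEN conjunct2, THEN conjunct1] by blast
lemma O2: "le x y \<Longrightarrow> le (ad x z) (ad y z)" using ax[THEN conjunct2, THEN conjunct2, THEN conjunct2, THEN conjunct2, THEN conjunct2, THEN conjunct2, THEN conjunct2, THEN conjunct2, THEN conjunct2, THEN conjunct2, THEN conjunct2, THEN conjunct2, THEN conjunct2, THEN conjunct2, THEN conjunct1] by blast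
lemma O3: "ad y (E x) = E x \<Longrightarrow> le y (E x)" using ax[THEN conjunct2, THEN conjunct2, THEN conjunct2, THEN conjunct2, THEN conjunct2, THEN conjunct2, THEN conjunct2, THEN conjunct2, THEN conjunct2, THEN conjunct2, THEN conjunct2, THEN conjunct2, THEN conjunct2, THEN conjunct2, THEN conjunct2, THEN conjunct1] by blast
lemma O5: "le (E y) y \<Longrightarrow> le y z \<Longrightarrow> le (mu (E x) y) (mu (E x) z)" using ax[THEN conjunct2, THEN conjunct2, THEN conjunct2, THEN conjunct2, THEN conjunct2, THEN conjunct2, THEN conjunct2, THEN conjunct2, THEN conjunct2, THEN conjunct2, THEN conjunct2, THEN conjunct2, THEN conjunct2, THEN conjunct2, THEN conjunct2, THEN conjunct2, THEN conjunct2, THEN conjunct1] by blast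
lemma AM1: "\<exists>z. mu (E x) y = E z" using ax[THEN conjunct2, THEN conjunct2, THEN conjunct2, THEN conjunct2, THEN conjunct2, THEN conjunct2, THEN conjunct2, THEN conjunct2, THEN conjunct2, THEN conjunct2, THEN conjunct2, THEN conjunct2, THEN conjunct2, THEN conjunct2, THEN conjunct2, THEN conjunct2, THEN conjunct2, THEN conjunct2, THEN conjunct1] by blast
lemma AM2: "E (mu x y) = ad (mu (E x) y) (mu (E y) x)" using ax[THEN conjunct2, THEN conjunct2, THEN conjunct2, THEN conjunct2, THEN conjunct2, THEN conjunct2, THEN conjunct2, THEN conjunct2, THEN conjunct2, THEN conjunct2, THEN conjunct2, THEN conjunct2, THEN conjunct2, THEN conjunct2, THEN conjunct2, THEN conjunct2, THEN conjunct2, THEN conjunct2, THEN conjunct2, THEN conjunct1] by blast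
lemma AM3: "x \<noteq> E x \<Longrightarrow> E (U x) = mu (E x) (I x)" using ax[THEN conjunct2, THEN conjunct2, THEN conjunct2, THEN conjunct2, THEN conjunct2, THEN conjunct2, THEN conjunct2, THEN conjunct2, THEN conjunct2, THEN conjunct2, THEN conjunct2, THEN conjunct2, THEN conjunct2, THEN conjunct2, THEN conjunct2, THEN conjunct2, THEN conjunct2, THEN conjunct2, THEN conjunct2, THEN conjunct2, THEN conjunct1] by blast
lemma AM4: "ad (mu x y) (mu x z) = ad (ad (mu x (ad y z)) (mu (E x) y)) (mu (E x) z)" using ax[THEN conjunct2, THEN conjunct2, THEN conjunct2, THEN conjunct2, THEN conjunct2, THEN conjunct2, THEN conjunct2, THEN conjunct2, THEN conjunct2, THEN conjunct2, THEN conjunct2, THEN conjunct2, THEN conjunct2, THEN conjunct2, THEN conjunct2, THEN conjunct2, THEN conjunct2, THEN conjunct2, THEN conjunct2, THEN conjunct2, THEN conjunct2, THEN conjunct1] by blast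
lemma AM5: "N (mu x y) = mu (N x) y" using ax[THEN conjunct2, THEN conjunct2, THEN conjunct2, THEN conjunct2, THEN conjunct2, THEN conjunct2, THEN conjunct2, THEN conjunct2, THEN conjunct2, THEN conjunct2, THEN conjunct2, THEN conjunct2, THEN conjunct2, THEN conjunct2, THEN conjunct2, THEN conjunct2, THEN conjunct2, THEN conjunct2, THEN conjunct2, THEN conjunct2, THEN conjunct2, THEN conjunct2, THEN conjunct1] by blast
lemma E1: "\<exists>!m. \<forall>x. ad m x = x" using ax[THEN conjunct2, THEN conjunct2, THEN conjunct2, THEN conjunct2, THEN conjunct2, THEN conjunct2, THEN conjunct2, THEN conjunct2, THEN conjunct2, THEN conjunct2, THEN conjunct2, THEN conjunct2, THEN conjunct2, THEN conjunct2, THEN conjunct2, THEN conjunct2, THEN conjunct2, THEN conjunct2, THEN conjunct2, THEN conjunct2, THEN conjunct2, THEN conjunct2, THEN conjunct2, THEN conjunct1] by blast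

lemma e_prop: "ad x (E x) = x \<and> (\<forall>f. ad x f = x \<longrightarrow> ad (E x) f = E x)"
  unfolding sol_e_def by (rule theI'[OF A2])
lemma e_uniq: "ad x e' = x \<Longrightarrow> (\<And>f. ad x f = x \<Longrightarrow> ad e' f = e') \<Longrightarrow> E x = e'"
  unfolding sol_e_def by (rule the1_equality[OF A2]) auto
lemma neg_prop: "ad x (N x) = E x \<and> E (N x) = E x"
  unfolding sol_neg_def by (rule theI'[OF A3])
lemma neg_uniq: "ad x s = E x \<Longrightarrow> E s = E x \<Longrightarrow> N x = s"
  unfolding sol_neg_def by (rule the1_equality[OF A3]) auto
lemma u_prop: "x \<noteq> E x \<Longrightarrow> mu x (U x) = x"
  unfolding sol_u_def using theI'[OF M2] by blast
lemma inv_prop: "x \<noteq> E x \<Longrightarrow> mu x (I x) = U x"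
  unfolding sol_inv_def using theI'[OF M3] by blast
lemma zero: "ad Z y = y"
  unfolding sol_zero_def using theI'[OF E1] by blast

lemma ee: "E (E x) = E x"
proof -
  have "ad (E x) (E x) = E x" using e_prop[of x] by metis
  thus ?thesis by (rule e_uniq) simp
qed
lemma eZ: "E Z = Z" by (rule e_uniq) (auto simp: zero)
lemma mag_idem: "m = E m \<Longrightarrow> ad m m = m" using e_prop[of m] by metis
lemma neg_mag: "m = E m \<Longrightarrow> N m = m" by (rule neg_uniq) (use mag_idem in auto)
lemma zero_le: "le Z (E x)" by (rule O3) (simp add: zero)
lemma mag_le: "m = E m \<Longrightarrow> n = E n \<Longrightarrow> le m n \<Longrightarrow> ad m n = n"
proof -
  assume m: "m = E m" and n: "n = E n" and mn: "le m n"
  have "le Z m" using zero_le m by metis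
  from O2[OF this, of n] have 1: "le n (ad m n)" by (simp add: zero)
  from O2[OF mn, of n] have "le (ad m n) n" using mag_idem[OF n] by simp
  thus ?thesis using 1 antisym by blast
qed
lemma prec_mag: "E p = Z \<Longrightarrow> m = E m \<Longrightarrow> E (ad p m) = m"
proof -
  assume p: "E p = Z" and m: "m = E m"
  have y: "ad (ad p m) m = ad p m" using mag_idem[OF m] by (simp add: assoc)
  show ?thesis
  proof (cases "E (ad p m) = m")
    case False
    hence "E (ad p m) = Z" using A4[of p m] p m by metis
    moreover have "ad (E (ad p m)) m = E (ad p m)" using e_prop[of "ad p m"] y by blast
    ultimately show ?thesis by (simp add: zero)
  qed
qed
lemma mmag: "mu (E x) y = E (mu (E x) y)" using AM1[of x y] ee by metis

lemma absorb: "le Z b \<Longrightarrow> le b m \<Longrightarrow> m = E m \<Longrightarrow> ad b m = m"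
proof -
  assume b: "le Z b" and bm: "le b m" and m: "m = E m"
  from O2[OF b, of m] have 1: "le m (ad b m)" by (simp add: zero)
  from O2[OF bm, of m] have "le (ad b m) m" using mag_idem[OF m] by simp
  thus ?thesis using 1 antisym by blast
qed

lemma G: "E p = Z \<Longrightarrow> m = E m \<Longrightarrow> le m p \<Longrightarrow> mu m (ad p m) = mu m p"
proof -
  assume p: "E p = Z" and m: "m = E m" and mp: "le m p"
  have m0: "le Z m" using zero_le m by metis
  have p0: "le Z p" using trans[OF m0 mp] .
  have pp: "le p (ad p m)" using O2[OF m0, of p] zero comm by metis
  have em: "E m = m" using m by simp
  have mm_mp: "le (mu m m) (mu m p)" using O5[of m p m] mp em refl by simp
  have 1: "ad (mu m m) (mu m p) = mu m p"
    by (rule mag_le[OF _ _ mm_mp]) (use mmag[of m] em in metis)+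
  have "ad (mu m p) (mu m m) = ad (ad (mu m (ad p m)) (mu m p)) (mu m m)"
    using AM4[of m p m] em by simp
  hence 2: "mu m p = ad (mu m (ad p m)) (mu m p)" using 1 by (metis assoc comm)
  have 3: "le (mu m p) (mu m (ad p m))" using O5[of p "ad p m" m] p p0 pp em by simp
  have "ad (mu m p) (mu m (ad p m)) = mu m (ad p m)"
    by (rule mag_le[OF _ _ 3]) (use mmag[of m] em in metis)+
  thus ?thesis using 2 by (metis comm)
qed

lemma main:
  assumes x: "x \<noteq> E x" and xa: "x = ad a (E x)" and a0: "E a = Z"
  shows "le (E x) (sol_abs ad le a) \<and> E x \<noteq> sol_abs ad le a \<and>
         mu (E x) (I a) = mu (E x) (I x) \<and> mu (E x) (I x) = E (U x)"
proof -
  define n where "n = E x"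
  have nm: "n = E n" unfolding n_def by (simp add: ee)
  have xa': "x = ad a n" using xa n_def by simp
  have xn: "x \<noteq> n" using x n_def by simp
  have aZ: "a \<noteq> Z" using x xa' zero n_def by metis
  have aE: "a \<noteq> E a" using aZ a0 by simp
  have naZ: "N a \<noteq> Z"
  proof
    assume "N a = Z"
    hence "ad a Z = Z" using neg_prop[of a] a0 by simp
    thus False using aZ zero comm by metis
  qed
  have ena: "E (N a) = Z" using neg_prop[of a] a0 by simp
  have neq: "n \<noteq> sol_abs ad le a"
  proof
    assume h: "n = sol_abs ad le a"
    have "E (sol_abs ad le a) = Z" unfolding sol_abs_def using ena a0 by simp
    hence "n = Z" using h nm by simp
    thus False using h aZ naZ unfolding sol_abs_def by (auto split: if_splits)
  qed
  have sub: "ad b n = n" if "le Z b" "le b n" for b using absorb[OF that nm] .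
  have le1: "le n (sol_abs ad le a)"
  proof (rule ccontr)
    assume "\<not> le n (sol_abs ad le a)"
    hence h: "le (sol_abs ad le a) n" using total by blast
    have "ad a n = n"
    proof (cases "le (E a) a")
      case True
      thus ?thesis using h sub a0 unfolding sol_abs_def by simp
    next
      case False
      hence "le a Z" using total a0 by metis
      from O2[OF this, of "N a"] have "le Z (N a)" using neg_prop[of a] a0 by (simp add: zero)
      moreover have "le (N a) n" using h False unfolding sol_abs_def by simp
      ultimately have "ad (N a) n = n" using sub by blast
      hence "ad a n = ad (ad a (N a)) n" by (simp add: assoc)
      thus ?thesis using neg_prop[of a] a0 by (simp add: zero)
    qed
    thus False using xa' xn by simp
  qed
  have negx: "N x = ad (N a) n"
  proof (rule neg_uniq)
    have "ad x (ad (N a) n) = ad (ad a (N a)) (ad n n)" using xa' by (metis assoc comm)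
    thus "ad x (ad (N a) n) = E x" using neg_prop[of a] a0 mag_idem[OF nm] zero n_def[symmetric] by simp
    show "E (ad (N a) n) = E x" using prec_mag[OF ena nm] n_def[symmetric] by simp
  qed
  have en: "E n = n" using nm by simp
  have mnx: "mu n x = E (mu n x)" using mmag[of n x] en by simp
  have mna: "mu n a = E (mu n a)" using mmag[of n a] en by simp
  have nxa: "mu n x = mu n a"
  proof (cases "le (E a) a")
    case True
    hence "le n a" using le1 unfolding sol_abs_def by simp
    thus ?thesis using G[OF a0 nm] xa' by simp
  next
    case False
    hence "le n (N a)" using le1 unfolding sol_abs_def by simp
    hence 1: "mu n (N x) = mu n (N a)" using G[OF ena nm] negx by simp
    have "mu n (N y) = N (mu n y)" for y using AM5[of y n] mcomm by metis
    thus ?thesis using 1 neg_mag[OF mnx] neg_mag[OF mna] by metis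
  qed
  have nU: "mu n (U x) = n"
  proof -
    have a1: "E (mu x (U x)) = ad (mu n (U x)) (mu (E (U x)) x)" using AM2[of x "U x"] unfolding n_def .
    have "mu (E (U x)) x = mu (mu n (I x)) x" using AM3[OF x] unfolding n_def by simp
    also have "\<dots> = mu n (mu x (I x))" by (metis massoc mcomm)
    also have "\<dots> = mu n (U x)" using inv_prop[OF x] by simp
    finally have a2: "mu (E (U x)) x = mu n (U x)" .
    have a3: "E (mu x (U x)) = n" using u_prop[OF x] unfolding n_def by simp
    have "n = ad (mu n (U x)) (mu n (U x))" using a1 a2 a3 by simp
    thus ?thesis using mag_idem[OF mmag[of n "U x", unfolded en]] by simp
  qed
  have nUa: "mu n (U a) = n"
  proof -
    have "mu n (U a) = mu (mu n (U x)) (U a)" using nU by simp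
    also have "\<dots> = mu (mu (mu n x) (U a)) (I x)" using inv_prop[OF x] by (metis massoc mcomm)
    also have "\<dots> = mu (mu n (mu a (U a))) (I x)" using nxa by (metis massoc)
    also have "\<dots> = mu (mu n x) (I x)" using u_prop[OF aE] nxa by simp
    also have "\<dots> = n" using inv_prop[OF x] nU by (metis massoc)
    finally show ?thesis .
  qed
  have fin: "mu n (I x) = mu n (I a)"
  proof -
    have "mu n (I x) = mu (mu n (U a)) (I x)" using nUa by simp
    also have "\<dots> = mu (mu (mu n a) (I a)) (I x)" using inv_prop[OF aE] by (metis massoc)
    also have "\<dots> = mu (mu (mu n x) (I x)) (I a)" using nxa by (metis massoc mcomm)
    also have "\<dots> = mu n (I a)" using inv_prop[OF x] nU by (metis massoc)
    finally show ?thesis .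
  qed
  show ?thesis using le1 neq fin AM3[OF x] n_def[symmetric] by simp
qed

end

theorem mainTheorem10:
  fixes ad mu :: "'a \<Rightarrow> 'a \<Rightarrow> 'a" and le :: "'a \<Rightarrow> 'a \<Rightarrow> bool" and x a :: 'a
  assumes "solid ad mu le"
    and "x \<noteq> sol_e ad x"
    and "x = ad a (sol_e ad x)"
    and "sol_e ad a = sol_zero ad"
  shows "le (sol_e ad x) (sol_abs ad le a) \<and> sol_e ad x \<noteq> sol_abs ad le a \<and>
         mu (sol_e ad x) (sol_inv mu a) = mu (sol_e ad x) (sol_inv mu x) \<and>
         mu (sol_e ad x) (sol_inv mu x) = sol_e ad (sol_u mu x)"
  using sol.main[OF sol.intro[OF assms(1)] assms(2-4)] .

end
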